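(* Let $n\ge2$ and $h\in(0,1]$. (a) If $\epsilon\in[0,1]$ and $(\bar\omega_k)_{k=0}^{2n}$ satisfies $\bar\omega_k\in C(k,0,0)$, $\bar\omega_{n+k}\in C(n,k,k)$ for $k=0,\dots,n$, then $\max_kH(\bar\omega_k)$ equals $H(\bar\omega_{n/2})=n-\frac{n^2}2+hn$ if $n$ is even; $H(\bar\omega_{(n+1)/2})=n-\frac{n^2+1}2+\epsilon+h(n-1)$ if $n$ is odd and $h\le\epsilon$; $H(\bar\omega_{(n-1)/2})=n-\frac{n^2+1}2-\epsilon+h(n+1)$ if $n$ is odd and $\epsilon<h$. (b) If $0<h<-\epsilon\le1$ and $(\check\omega_k)_{k=0}^{2n}$ satisfies $\check\omega_k\in C(n-k,0,0)$, $\check\omega_{n+k}\in C(0,k,0)$ for $k=0,\dots,n$, then $\max_kH(\check\omega_k)$ equals $H(\check\omega_{n/2})=H(\check\omega_{n+n/2})=n-\frac{n^2}2+hn$ if $n$ is even and $h-\epsilon<1$; $H(\check\omega_{(n+2)/2})=H(\check\omega_{n+(n-2)/2})=n-\frac{n^2}2-2(\epsilon+1)+h(n+2)$ if $n$ is even and $1\le h-\epsilon<2$; $H(\check\omega_{(n+1)/2})=H(\check\omega_{n+(n-1)/2})=n-\frac{n^2+1}2-\epsilon+h(n+1)$ if $n$ is odd. (c) If $0<-\epsilon<h\le1$ and $(\tilde\omega_k)_{k=0}^{n}$ satisfies $\tilde\omega_k\in C(n,k,k)$ for $k=0,\dots,n$, then $\max_kH(\tilde\omega_k)$ equals $H(\tilde\omega_{n/2})=n-\frac{n^2}2-hn$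 if $n$ is even, and $H(\tilde\omega_{(n-1)/2})=n-\frac{n^2+1}2+\epsilon-h(n-1)$ if $n$ is odd.
   Context: The graph $\mathcal G(2,n)$ has vertex set $V=V^{(1)}\cup V^{(2)}$ with $V^{(1)}=\{1,\dots,n\}$, $V^{(2)}=\{n+1,\dots,2n\}$; its edge set is $E=E_{\mathrm{int}}\cup E_{\mathrm{cross}}$, where $E_{\mathrm{int}}$ consists of all pairs of distinct vertices in the same $V^{(k)}$ and $E_{\mathrm{cross}}=\{\{i,i+n\}:1\le i\le n\}$. For $\sigma\in\{-1,+1\}^V$, $H(\sigma)=-\sum_{\{i,j\}\in E_{\mathrm{int}}}\sigma_i\sigma_j-\epsilon\sum_{\{i,j\}\in E_{\mathrm{cross}}}\sigma_i\sigma_j-h\sum_{i\in V}\sigma_i$, with $\epsilon\in[-1,1]$. $C(p_1,p_2,a)$ is the set of configurations with exactly $p_1$ vertices of spin $+1$ in $V^{(1)}$, exactly $p_2$ vertices of spin $+1$ in $V^{(2)}$, and exactly $a$ cross-edges both of whose endpoints have spin $+1$ ($H$ is constant on each such set). *)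

theory Defs
  imports Complex_Main
begin

definition V1 :: "nat \<Rightarrow> nat set" where "V1 n = {1..n}"
definition V2 :: "nat \<Rightarrow> nat set" where "V2 n = {n+1..2*n}"
definition V :: "nat \<Rightarrow> nat set" where "V n = V1 n \<union> V2 n"

definition E_int :: "nat \<Rightarrow> nat set set" where
  "E_int n = {{i, j} | i j. i \<noteq> j \<and> ((i \<in> V1 n \<and> j \<in> V1 n) \<or> (i \<in> V2 n \<and> j \<in> V2 n))}"

definition E_cross :: "nat \<Rightarrow> nat set set" where
  "E_cross n = {{i, i + n} | i. 1 \<le> i \<and> i \<le> n}"

text \<open>Spin configurations: sigma takes values in {-1,+1} on V (values off V are irrelevant).\<close>
definition configs :: "nat \<Rightarrow> (nat \<Rightarrow> real) set" where
  "configs n = {\<sigma>. \<forall>i\<in>V n. \<sigma> i = 1 \<or> \<sigma> i = -1}"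

definition Ham :: "nat \<Rightarrow> real \<Rightarrow> real \<Rightarrow> (nat \<Rightarrow> real) \<Rightarrow> real" where
  "Ham n \<epsilon> h \<sigma> =
     - (\<Sum>e\<in>E_int n. \<Prod>i\<in>e. \<sigma> i)
     - \<epsilon> * (\<Sum>e\<in>E_cross n. \<Prod>i\<in>e. \<sigma> i)
     - h * (\<Sum>i\<in>V n. \<sigma> i)"

definition Cset :: "nat \<Rightarrow> nat \<Rightarrow> nat \<Rightarrow> nat \<Rightarrow> (nat \<Rightarrow> real) set" where
  "Cset n p1 p2 a = {\<sigma> \<in> configs n.
      card {i \<in> V1 n. \<sigma> i = 1} = p1 \<and>
      card {i \<in> V2 n. \<sigma> i = 1} = p2 \<and>
      card {e \<in> E_cross n. \<forall>i\<in>e. \<sigma> i = 1} = a}"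

end

theory Submission
  imports Defs
begin


definition EA :: "nat set \<Rightarrow> nat set set" where
  "EA A = {{i, j} | i j. i \<noteq> j \<and> i \<in> A \<and> j \<in> A}"

lemma EA_finite: "finite A \<Longrightarrow> finite (EA A)"
proof -
  assume "finite A"
  have "EA A \<subseteq> (\<lambda>(i,j). {i,j}) ` (A \<times> A)" unfolding EA_def by auto
  thus ?thesis using \<open>finite A\<close> by (meson finite_SigmaI finite_imageI finite_subset)
qed

lemma EA_empty: "EA {} = {}" unfolding EA_def by auto

lemma EA_insert: "a \<notin> A \<Longrightarrow> EA (insert a A) = EA A \<union> (\<lambda>j. {a,j}) ` A"
  unfolding EA_def by auto

lemma pairsum:
  fixes \<sigma> :: "nat \<Rightarrow> real"
  assumes "finite A" "\<forall>i\<in>A. \<sigma> i = 1 \<or> \<sigma> i = -1"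
  shows "(\<Sum>e\<in>EA A. \<Prod>i\<in>e. \<sigma> i) = ((\<Sum>i\<in>A. \<sigma> i)^2 - real (card A)) / 2"
  using assms
proof (induction A rule: finite_induct)
  case empty thus ?case by (simp add: EA_empty)
next
  case (insert a A)
  have disj: "EA A \<inter> (\<lambda>j. {a,j}) ` A = {}" using insert(2) unfolding EA_def by (fastforce simp: doubleton_eq_iff)
  have inj: "inj_on (\<lambda>j. {a,j}) A" using insert(2) by (auto simp: inj_on_def doubleton_eq_iff)
  have "(\<Sum>e\<in>EA (insert a A). \<Prod>i\<in>e. \<sigma> i) = (\<Sum>e\<in>EA A. \<Prod>i\<in>e. \<sigma> i) + (\<Sum>e\<in>(\<lambda>j. {a,j}) ` A. \<Prod>i\<in>e. \<sigma> i)"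
    unfolding EA_insert[OF insert(2)]
    by (rule sum.union_disjoint) (use insert EA_finite disj in auto)
  also have "(\<Sum>e\<in>(\<lambda>j. {a,j}) ` A. \<Prod>i\<in>e. \<sigma> i) = (\<Sum>j\<in>A. \<sigma> a * \<sigma> j)"
  proof -
    have ne: "\<And>x. x\<in>A \<Longrightarrow> a \<noteq> x" using insert(2) by auto
    show ?thesis using inj ne by (subst sum.reindex) (auto intro!: sum.cong)
  qed
  also have "\<dots> = \<sigma> a * (\<Sum>j\<in>A. \<sigma> j)" by (simp add: sum_distrib_left)
  finally have eq: "(\<Sum>e\<in>EA (insert a A). \<Prod>i\<in>e. \<sigma> i) = ((\<Sum>i\<in>A. \<sigma> i)^2 - real (card A)) / 2 + \<sigma> a * (\<Sum>j\<in>A. \<sigma> j)"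
    using insert by simp
  have sa: "\<sigma> a * \<sigma> a = 1" using insert(4) by auto
  have sq: "(\<sigma> a + (\<Sum>i\<in>A. \<sigma> i))^2 = \<sigma> a * \<sigma> a + 2 * (\<sigma> a * (\<Sum>i\<in>A. \<sigma> i)) + (\<Sum>i\<in>A. \<sigma> i)^2"
    by (simp add: power2_eq_square algebra_simps)
  show ?case using insert(1,2) eq sq unfolding sa
    by (simp add: field_simps)
qed

lemma sum_pm:
  fixes \<sigma> :: "nat \<Rightarrow> real"
  assumes "finite A" "\<forall>i\<in>A. \<sigma> i = 1 \<or> \<sigma> i = -1"
  shows "(\<Sum>i\<in>A. \<sigma> i) = 2 * real (card {i\<in>A. \<sigma> i = 1}) - real (card A)"
proof -
  have "(\<Sum>i\<in>A. \<sigma> i) = (\<Sum>i\<in>A. 2 * (if \<sigma> i = 1 then 1 else 0) - 1)"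
    using assms(2) by (intro sum.cong) auto
  also have "\<dots> = 2 * (\<Sum>i\<in>A. (if \<sigma> i = 1 then 1 else 0)) - real (card A)"
    by (simp add: sum_subtractf sum_distrib_left)
  also have "(\<Sum>i\<in>A. (if \<sigma> i = 1 then 1 else 0)) = real (card {i\<in>A. \<sigma> i = 1})"
    using assms(1) by (simp add: sum.inter_filter[symmetric])
  finally show ?thesis .
qed

lemma card_ind:
  "finite A \<Longrightarrow> (\<Sum>i\<in>A. (if P i then 1 else 0)) = real (card {i\<in>A. P i})"
  by (simp add: sum.inter_filter[symmetric])

definition HF :: "real \<Rightarrow> real \<Rightarrow> real \<Rightarrow> real \<Rightarrow> real \<Rightarrow> real \<Rightarrow> real" where
  "HF n \<epsilon> h p1 p2 a = - (((2*p1-n)^2 - n)/2 + ((2*p2-n)^2 - n)/2) - \<epsilon> * (n - 2*p1 - 2*p2 + 4*a) - h * (2*p1 + 2*p2 - 2*n)"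

lemma Ham_C:
  assumes "\<sigma> \<in> Cset n p1 p2 a"
  shows "Ham n \<epsilon> h \<sigma> = HF n \<epsilon> h p1 p2 a"
proof -
  have pm: "\<forall>i\<in>V n. \<sigma> i = 1 \<or> \<sigma> i = -1" and c1: "card {i \<in> V1 n. \<sigma> i = 1} = p1"
    and c2: "card {i \<in> V2 n. \<sigma> i = 1} = p2" and c3: "card {e \<in> E_cross n. \<forall>i\<in>e. \<sigma> i = 1} = a"
    using assms unfolding Cset_def configs_def by auto
  have pm1: "\<forall>i\<in>V1 n. \<sigma> i = 1 \<or> \<sigma> i = -1" and pm2: "\<forall>i\<in>V2 n. \<sigma> i = 1 \<or> \<sigma> i = -1"
    using pm unfolding V_def by auto
  have dV: "V1 n \<inter> V2 n = {}" unfolding V1_def V2_def by auto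
  have cV1: "card (V1 n) = n" and cV2: "card (V2 n) = n" unfolding V1_def V2_def by auto
  have fin1: "finite (V1 n)" "finite (V2 n)" unfolding V1_def V2_def by auto
  have s1: "(\<Sum>i\<in>V1 n. \<sigma> i) = 2 * real p1 - real n" using sum_pm[OF fin1(1) pm1] c1 cV1 by simp
  have s2: "(\<Sum>i\<in>V2 n. \<sigma> i) = 2 * real p2 - real n" using sum_pm[OF fin1(2) pm2] c2 cV2 by simp
  have sV: "(\<Sum>i\<in>V n. \<sigma> i) = 2 * real p1 + 2 * real p2 - 2 * real n"
    unfolding V_def using sum.union_disjoint[OF fin1 dV, of \<sigma>] s1 s2 by simp
  have Eint: "E_int n = EA (V1 n) \<union> EA (V2 n)" unfolding E_int_def EA_def by blast
  have dE: "EA (V1 n) \<inter> EA (V2 n) = {}" using dV unfolding EA_def by (auto simp: doubleton_eq_iff)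
  have sI: "(\<Sum>e\<in>E_int n. \<Prod>i\<in>e. \<sigma> i) = ((2*real p1-n)^2 - n)/2 + ((2*real p2-n)^2 - n)/2"
    unfolding Eint
    using sum.union_disjoint[OF EA_finite[OF fin1(1)] EA_finite[OF fin1(2)] dE, of "\<lambda>e. \<Prod>i\<in>e. \<sigma> i"]
      pairsum[OF fin1(1) pm1] pairsum[OF fin1(2) pm2] s1 s2 cV1 cV2 by simp
  have Ec: "E_cross n = (\<lambda>i. {i, i+n}) ` {1..n}" unfolding E_cross_def by auto
  have injc: "inj_on (\<lambda>i. {i, i+n}) {1..n}" by (auto simp: inj_on_def doubleton_eq_iff)
  have sC0: "(\<Sum>e\<in>E_cross n. \<Prod>i\<in>e. \<sigma> i) = (\<Sum>i\<in>{1..n}. \<sigma> i * \<sigma> (i+n))"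
    unfolding Ec by (subst sum.reindex[OF injc]) (auto intro!: sum.cong)
  have pmi: "\<sigma> i = 1 \<or> \<sigma> i = -1" "\<sigma> (i+n) = 1 \<or> \<sigma> (i+n) = -1" if "i \<in> {1..n}" for i
    using that pm1 pm2 unfolding V1_def V2_def by auto
  have "(\<Sum>i\<in>{1..n}. \<sigma> i * \<sigma> (i+n)) = (\<Sum>i\<in>{1..n}. 4 * (if \<sigma> i = 1 \<and> \<sigma> (i+n) = 1 then 1 else 0)
      - 2 * (if \<sigma> i = 1 then 1 else 0) - 2 * (if \<sigma> (i+n) = 1 then 1 else 0) + 1)"
    apply (rule sum.cong, simp)
    subgoal for i using pmi[of i] by auto
    done
  also have "\<dots> = 4 * (\<Sum>i\<in>{1..n}. (if \<sigma> i = 1 \<and> \<sigma> (i+n) = 1 then 1 else 0))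
      - 2 * (\<Sum>i\<in>{1..n}. (if \<sigma> i = 1 then 1 else 0)) - 2 * (\<Sum>i\<in>{1..n}. (if \<sigma> (i+n) = 1 then 1 else 0)) + real n"
    by (simp add: sum.distrib sum_subtractf sum_distrib_left)
  also have "(\<Sum>i\<in>{1..n}. (if \<sigma> i = 1 then 1 else 0)) = real p1"
    using card_ind[of "{1..n}" "\<lambda>i. \<sigma> i = 1"] c1 unfolding V1_def by simp
  also have "(\<Sum>i\<in>{1..n}. (if \<sigma> (i+n) = 1 then 1 else 0)) = real p2"
  proof -
    have "{i \<in> V2 n. \<sigma> i = 1} = (\<lambda>i. i+n) ` {i\<in>{1..n}. \<sigma> (i+n) = 1}"
    proof (intro set_eqI iffI)
      fix x assume "x \<in> {i \<in> V2 n. \<sigma> i = 1}"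
      then show "x \<in> (\<lambda>i. i+n) ` {i\<in>{1..n}. \<sigma> (i+n) = 1}"
        by (intro image_eqI[where x="x-n"]) (auto simp: V2_def)
    next
      fix x assume "x \<in> (\<lambda>i. i+n) ` {i\<in>{1..n}. \<sigma> (i+n) = 1}"
      then show "x \<in> {i \<in> V2 n. \<sigma> i = 1}" by (auto simp: V2_def)
    qed
    hence "card {i \<in> V2 n. \<sigma> i = 1} = card {i\<in>{1..n}. \<sigma> (i+n) = 1}"
      by (simp add: card_image)
    thus ?thesis using card_ind[of "{1..n}" "\<lambda>i. \<sigma> (i+n) = 1"] c2 by simp
  qed
  also have "(\<Sum>i\<in>{1..n}. (if \<sigma> i = 1 \<and> \<sigma> (i+n) = 1 then 1 else 0)) = real a"
  proof -
    have seq: "{e \<in> E_cross n. \<forall>i\<in>e. \<sigma> i = 1} = (\<lambda>i. {i, i+n}) ` {i\<in>{1..n}. \<sigma> i = 1 \<and> \<sigma> (i+n) = 1}"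
      unfolding Ec by auto
    then have "card {e \<in> E_cross n. \<forall>i\<in>e. \<sigma> i = 1} = card {i\<in>{1..n}. \<sigma> i = 1 \<and> \<sigma> (i+n) = 1}"
    proof -
      have sub: "{i\<in>{1..n}. \<sigma> i = 1 \<and> \<sigma> (i+n) = 1} \<subseteq> {1..n}" by auto
      show ?thesis using seq card_image[OF inj_on_subset[OF injc sub]] by simp
    qed
    thus ?thesis using card_ind[of "{1..n}" "\<lambda>i. \<sigma> i = 1 \<and> \<sigma> (i+n) = 1"] c3 by simp
  qed
  finally have sC: "(\<Sum>e\<in>E_cross n. \<Prod>i\<in>e. \<sigma> i) = real n - 2*p1 - 2*p2 + 4*a"
    using sC0 by simp
  show ?thesis unfolding Ham_def HF_def using sI sC sV by simp
qed



definition Q :: "real \<Rightarrow> real \<Rightarrow> real" where "Q b x = -(x^2)/2 + b*x"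
definition EV :: "real \<Rightarrow> bool" where "EV x = (\<exists>m::int. x = 2 * of_int m)"
definition OD :: "real \<Rightarrow> bool" where "OD x = (\<exists>m::int. x = 2 * of_int m + 1)"

lemma int_cases3: fixes m :: int shows "m \<ge> 1 \<or> m = 0 \<or> m \<le> -1" by linarith

lemma Qe: assumes "\<bar>b\<bar> \<le> 1" "EV x" shows "Q b x \<le> 0"
proof -
  obtain m :: int where x: "x = 2 * of_int m" using assms(2) EV_def by auto
  define y where "y = (of_int m :: real)"
  have yc: "y \<ge> 1 \<or> y = 0 \<or> y \<le> -1" unfolding y_def using int_cases3[of m] by auto
  have "b * y \<le> y * y"
  proof -
    { assume "y \<ge> 1"
      have "b*y \<le> 1*y" by (rule mult_right_mono) (use assms(1) \<open>y \<ge> 1\<close> in auto)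
      also have "1*y \<le> y*y" by (rule mult_right_mono) (use \<open>y \<ge> 1\<close> in auto)
      finally have ?thesis . }
    moreover
    { assume "y \<le> -1"
      have "b*y \<le> (-1)*y" by (rule mult_right_mono_neg) (use assms(1) \<open>y \<le> -1\<close> in auto)
      also have "(-1)*y \<le> y*y" by (rule mult_right_mono_neg) (use \<open>y \<le> -1\<close> in auto)
      finally have ?thesis . }
    ultimately show ?thesis using yc by auto
  qed
  thus ?thesis unfolding Q_def x y_def[symmetric] by (simp add: power2_eq_square)
qed

lemma Qe2: assumes "-2 \<le> b" "b \<le> -1" "EV x" shows "Q b x \<le> Q b (-2)"
proof -
  obtain m :: int where x: "x = 2 * of_int m" using assms(3) EV_def by auto
  define y where "y = (of_int m :: real)"
  have "m \<ge> 0 \<or> m = -1 \<or> m \<le> -2" by linarith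
  hence yc: "y \<ge> 0 \<or> y = -1 \<or> y \<le> -2" unfolding y_def by auto
  have "0 \<le> (y+1)*(y-1-b)"
  proof -
    { assume "y \<ge> 0" hence ?thesis using assms by (intro mult_nonneg_nonneg) auto }
    moreover
    { assume "y \<le> -2" hence ?thesis using assms by (intro mult_nonpos_nonpos) auto }
    ultimately show ?thesis using yc by auto
  qed
  hence "0 \<le> y*y - 1 - b*y - b" by (simp add: algebra_simps)
  thus ?thesis unfolding Q_def x y_def[symmetric] by (simp add: power2_eq_square)
qed

lemma Qo: assumes "0 \<le> b" "b \<le> 2" "OD x" shows "Q b x \<le> Q b 1"
proof -
  obtain m :: int where x: "x = 2 * of_int m + 1" using assms(3) OD_def by auto
  define y where "y = (of_int m :: real)"
  have yc: "y \<ge> 1 \<or> y = 0 \<or> y \<le> -1" unfolding y_def using int_cases3[of m] by auto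
  have "b * y \<le> y * (y+1)"
  proof -
    { assume "y \<ge> 1"
      have "b*y \<le> 2*y" by (rule mult_right_mono) (use assms \<open>y \<ge> 1\<close> in auto)
      also have "2*y \<le> (y+1)*y" by (rule mult_right_mono) (use \<open>y \<ge> 1\<close> in auto)
      finally have ?thesis by (simp add: mult.commute) }
    moreover
    { assume "y \<le> -1"
      have "b*y \<le> 0" using assms \<open>y \<le> -1\<close> by (intro mult_nonneg_nonpos) auto
      also have "0 \<le> y*(y+1)" using \<open>y \<le> -1\<close> by (intro mult_nonpos_nonpos) auto
      finally have ?thesis . }
    ultimately show ?thesis using yc by auto
  qed
  thus ?thesis unfolding Q_def x y_def[symmetric] by (simp add: power2_eq_square field_simps)
qed

lemma Qo': assumes "-2 \<le> b" "b \<le> 0" "OD x" shows "Q b x \<le> Q b (-1)"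
proof -
  obtain m :: int where x: "x = 2 * of_int m + 1" using assms(3) OD_def by auto
  have "OD (-x)" unfolding OD_def by (rule exI[of _ "-m-1"]) (simp add: x)
  from Qo[of "-b" "-x"] this assms have "Q (-b) (-x) \<le> Q (-b) 1" by auto
  thus ?thesis unfolding Q_def by (simp add: power2_eq_square)
qed



lemma HF_first: "HF n \<epsilon> h p 0 0 = n - n^2/2 + h*n + Q (\<epsilon>-h) (2*p-n)"
  unfolding HF_def Q_def by (simp add: power2_eq_square field_simps)
lemma HF_cross: "HF n \<epsilon> h n p p = n - n^2/2 - h*n + Q (-(\<epsilon>+h)) (2*p-n)"
  unfolding HF_def Q_def by (simp add: power2_eq_square field_simps)
lemma HF_b: "HF n \<epsilon> h 0 p 0 = HF n \<epsilon> h p 0 0"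
  unfolding HF_def by (simp add: power2_eq_square field_simps)

lemma par_e1: "even n \<Longrightarrow> EV (2*real k - real n)"
  unfolding EV_def by (elim evenE) (rule_tac x="int k - int b" in exI, simp)
lemma par_e2: "even n \<Longrightarrow> EV (real n - 2*real k)"
  unfolding EV_def by (elim evenE) (rule_tac x="int b - int k" in exI, simp)
lemma par_o1: "odd n \<Longrightarrow> OD (2*real k - real n)"
  unfolding OD_def by (elim oddE) (rule_tac x="int k - int b - 1" in exI, simp)
lemma par_o2: "odd n \<Longrightarrow> OD (real n - 2*real k)"
  unfolding OD_def by (elim oddE) (rule_tac x="int b - int k" in exI, simp)

lemma max2:
  fixes f :: "nat \<Rightarrow> real"
  assumes "\<And>k. k \<le> n \<Longrightarrow> f k \<le> c" "\<And>k. k \<le> n \<Longrightarrow> f (n+k) \<le> c" "j \<le> 2*n" "f j = c"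
  shows "Max (f ` {0..2*n}) = f j"
proof (rule Max_eqI)
  show "finite (f ` {0..2*n})" by simp
  show "f j \<in> f ` {0..2*n}" using assms(3) by auto
  fix y assume "y \<in> f ` {0..2*n}"
  then obtain k where k: "k \<le> 2*n" "y = f k" by auto
  show "y \<le> f j"
  proof (cases "k \<le> n")
    case True thus ?thesis using assms(1)[of k] k assms(4) by simp
  next
    case False
    then have "k = n + (k - n)" "k - n \<le> n" using k by auto
    thus ?thesis using assms(2)[of "k-n"] k assms(4) by metis
  qed
qed

lemma max1:
  fixes f :: "nat \<Rightarrow> real"
  assumes "\<And>k. k \<le> n \<Longrightarrow> f k \<le> c" "j \<le> n" "f j = c"
  shows "Max (f ` {0..n}) = f j"
proof (rule Max_eqI)
  show "finite (f ` {0..n})" by simp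
  show "f j \<in> f ` {0..n}" using assms by auto
  fix y assume "y \<in> f ` {0..n}"
  then obtain k where k: "k \<le> n" "y = f k" by auto
  show "y \<le> f j" using assms(1)[of k] k assms(3) by simp
qed

lemma partA:
  fixes n :: nat and \<epsilon> h :: real
  assumes n2: "n \<ge> 2" and h0: "0 < h" and h1: "h \<le> 1"
  shows
   "(\<forall>\<omega> :: nat \<Rightarrow> nat \<Rightarrow> real.
      0 \<le> \<epsilon> \<and> \<epsilon> \<le> 1 \<and>
      (\<forall>k\<le>n. \<omega> k \<in> Cset n k 0 0 \<and> \<omega> (n + k) \<in> Cset n n k k) \<longrightarrow>
      (let M = Max ((\<lambda>k. Ham n \<epsilon> h (\<omega> k)) ` {0..2*n}) in
        (even n \<longrightarrow> M = Ham n \<epsilon> h (\<omega> (n div 2)) \<and>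
             Ham n \<epsilon> h (\<omega> (n div 2)) = real n - real n ^ 2 / 2 + h * real n) \<and>
        (odd n \<and> h \<le> \<epsilon> \<longrightarrow> M = Ham n \<epsilon> h (\<omega> ((n + 1) div 2)) \<and>
             Ham n \<epsilon> h (\<omega> ((n + 1) div 2)) =
               real n - (real n ^ 2 + 1) / 2 + \<epsilon> + h * (real n - 1)) \<and>
        (odd n \<and> \<epsilon> < h \<longrightarrow> M = Ham n \<epsilon> h (\<omega> ((n - 1) div 2)) \<and>
             Ham n \<epsilon> h (\<omega> ((n - 1) div 2)) =
               real n - (real n ^ 2 + 1) / 2 - \<epsilon> + h * (real n + 1))))"
proof (intro allI impI)
  fix \<omega> :: "nat \<Rightarrow> nat \<Rightarrow> real"
  assume H: "0 \<le> \<epsilon> \<and> \<epsilon> \<le> 1 \<and> (\<forall>k\<le>n. \<omega> k \<in> Cset n k 0 0 \<and> \<omega> (n + k) \<in> Cset n n k k)"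
  hence e0: "0 \<le> \<epsilon>" and e1: "\<epsilon> \<le> 1" and c1: "\<And>k. k \<le> n \<Longrightarrow> \<omega> k \<in> Cset n k 0 0"
    and c2: "\<And>k. k \<le> n \<Longrightarrow> \<omega> (n+k) \<in> Cset n n k k" by auto
  define K where "K = real n - real n^2/2 + h*real n"
  define b where "b = \<epsilon> - h"
  define f where "f = (\<lambda>k. Ham n \<epsilon> h (\<omega> k))"
  have v1: "f k = K + Q b (2*real k - real n)" if "k \<le> n" for k
    using Ham_C[OF c1[OF that]] HF_first unfolding f_def K_def b_def by simp
  have v2: "f (n+k) \<le> K + Q b (real n - 2*real k)" if "k \<le> n" for k
  proof -
    have hk: "0 \<le> h * real k" using h0 by simp
    have e: "f (n+k) = n - n^2/2 - h*n + Q (-(\<epsilon>+h)) (2*real k - real n)"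
      using Ham_C[OF c2[OF that], of \<epsilon> h] HF_cross[of n \<epsilon> h k] unfolding f_def by simp
    have "K + Q b (real n - 2*real k) - f (n+k) = 4*(h*real k)"
      unfolding e K_def b_def Q_def by (simp add: power2_eq_square algebra_simps)
    thus ?thesis using hk by linarith
  qed
  have bb: "\<bar>b\<bar> \<le> 1" using e0 e1 h0 h1 unfolding b_def by auto
  show "let M = Max (f ` {0..2*n}) in
        (even n \<longrightarrow> M = f (n div 2) \<and>
             f (n div 2) = real n - real n ^ 2 / 2 + h * real n) \<and>
        (odd n \<and> h \<le> \<epsilon> \<longrightarrow> M = f ((n + 1) div 2) \<and>
             f ((n + 1) div 2) =
               real n - (real n ^ 2 + 1) / 2 + \<epsilon> + h * (real n - 1)) \<and>
        (odd n \<and> \<epsilon> < h \<longrightarrow> M = f ((n - 1) div 2) \<and>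
             f ((n - 1) div 2) =
               real n - (real n ^ 2 + 1) / 2 - \<epsilon> + h * (real n + 1))"
    unfolding Let_def
  proof (intro conjI impI)
    assume ev: "even n"
    then obtain q where q: "n = 2*q" by (elim evenE)
    have fj: "f (n div 2) = K" using v1[of "n div 2"] q unfolding Q_def by simp
    show "Max (f ` {0..2*n}) = f (n div 2)"
      proof (rule max2[where c="K"])
      fix k assume kn: "k \<le> n"
      show "f k \<le> K" using v1[OF kn] Qe[OF bb par_e1[OF ev, of k]] by simp
    next
      fix k assume kn: "k \<le> n"
      show "f (n+k) \<le> K" using v2[OF kn] Qe[OF bb par_e2[OF ev, of k]] by simp
    next
      show "n div 2 \<le> 2*n" by simp
    qed (rule fj)
    show "f (n div 2) = real n - real n ^ 2 / 2 + h * real n" using fj K_def by simp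
  next
    assume od: "odd n \<and> h \<le> \<epsilon>"
    hence odn: "odd n" by simp
    then obtain q where q: "n = 2*q+1" by (blast elim: oddE)
    have b0: "0 \<le> b" "b \<le> 2" using od bb unfolding b_def by auto
    have fj: "f ((n+1) div 2) = K + Q b 1" using v1[of "(n+1) div 2"] q by simp
    show "Max (f ` {0..2*n}) = f ((n+1) div 2)"
      proof (rule max2[where c="K + Q b 1"])
      fix k assume kn: "k \<le> n"
      show "f k \<le> K + Q b 1" using v1[OF kn] Qo[OF b0 par_o1[OF odn, of k]] by simp
    next
      fix k assume kn: "k \<le> n"
      show "f (n+k) \<le> K + Q b 1" using v2[OF kn] Qo[OF b0 par_o2[OF odn, of k]] by simp
    next
      show "(n+1) div 2 \<le> 2*n" by simp
    qed (rule fj)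
    show "f ((n+1) div 2) = real n - (real n ^ 2 + 1) / 2 + \<epsilon> + h * (real n - 1)"
      using fj unfolding K_def Q_def b_def by (simp add: field_simps)
  next
    assume od: "odd n \<and> \<epsilon> < h"
    hence odn: "odd n" by simp
    then obtain q where q: "n = 2*q+1" by (blast elim: oddE)
    have b0: "-2 \<le> b" "b \<le> 0" using od bb unfolding b_def by auto
    have fj: "f ((n-1) div 2) = K + Q b (-1)" using v1[of "(n-1) div 2"] q by simp
    show "Max (f ` {0..2*n}) = f ((n-1) div 2)"
      proof (rule max2[where c="K + Q b (-1)"])
      fix k assume kn: "k \<le> n"
      show "f k \<le> K + Q b (-1)" using v1[OF kn] Qo'[OF b0 par_o1[OF odn, of k]] by simp
    next
      fix k assume kn: "k \<le> n"
      show "f (n+k) \<le> K + Q b (-1)" using v2[OF kn] Qo'[OF b0 par_o2[OF odn, of k]] by simp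
    next
      show "(n-1) div 2 \<le> 2*n" by simp
    qed (rule fj)
    show "f ((n-1) div 2) = real n - (real n ^ 2 + 1) / 2 - \<epsilon> + h * (real n + 1)"
      using fj unfolding K_def Q_def b_def by (simp add: field_simps)
  qed
qed


lemma partB:
  fixes n :: nat and \<epsilon> h :: real
  assumes n2: "n \<ge> 2" and h0: "0 < h" and h1: "h \<le> 1"
  shows
   "(\<forall>\<omega> :: nat \<Rightarrow> nat \<Rightarrow> real.
      0 < h \<and> h < - \<epsilon> \<and> - \<epsilon> \<le> 1 \<and>
      (\<forall>k\<le>n. \<omega> k \<in> Cset n (n - k) 0 0 \<and> \<omega> (n + k) \<in> Cset n 0 k 0) \<longrightarrow>
      (let M = Max ((\<lambda>k. Ham n \<epsilon> h (\<omega> k)) ` {0..2*n}) in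
        (even n \<and> h - \<epsilon> < 1 \<longrightarrow>
             M = Ham n \<epsilon> h (\<omega> (n div 2)) \<and>
             Ham n \<epsilon> h (\<omega> (n div 2)) = Ham n \<epsilon> h (\<omega> (n + n div 2)) \<and>
             Ham n \<epsilon> h (\<omega> (n + n div 2)) = real n - real n ^ 2 / 2 + h * real n) \<and>
        (even n \<and> 1 \<le> h - \<epsilon> \<and> h - \<epsilon> < 2 \<longrightarrow>
             M = Ham n \<epsilon> h (\<omega> ((n + 2) div 2)) \<and>
             Ham n \<epsilon> h (\<omega> ((n + 2) div 2)) = Ham n \<epsilon> h (\<omega> (n + (n - 2) div 2)) \<and>
             Ham n \<epsilon> h (\<omega> (n + (n - 2) div 2)) =
               real n - real n ^ 2 / 2 - 2 * (\<epsilon> + 1) + h * (real n + 2)) \<and>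
        (odd n \<longrightarrow>
             M = Ham n \<epsilon> h (\<omega> ((n + 1) div 2)) \<and>
             Ham n \<epsilon> h (\<omega> ((n + 1) div 2)) = Ham n \<epsilon> h (\<omega> (n + (n - 1) div 2)) \<and>
             Ham n \<epsilon> h (\<omega> (n + (n - 1) div 2)) =
               real n - (real n ^ 2 + 1) / 2 - \<epsilon> + h * (real n + 1))))"
proof (intro allI impI)
  fix \<omega> :: "nat \<Rightarrow> nat \<Rightarrow> real"
  assume H: "0 < h \<and> h < - \<epsilon> \<and> - \<epsilon> \<le> 1 \<and>
      (\<forall>k\<le>n. \<omega> k \<in> Cset n (n - k) 0 0 \<and> \<omega> (n + k) \<in> Cset n 0 k 0)"
  hence e0: "h < - \<epsilon>" and e1: "- \<epsilon> \<le> 1" and c1: "\<And>k. k \<le> n \<Longrightarrow> \<omega> k \<in> Cset n (n-k) 0 0"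
    and c2: "\<And>k. k \<le> n \<Longrightarrow> \<omega> (n+k) \<in> Cset n 0 k 0" by auto
  define K where "K = real n - real n^2/2 + h*real n"
  define b where "b = \<epsilon> - h"
  define f where "f = (\<lambda>k. Ham n \<epsilon> h (\<omega> k))"
  have v1: "f k = K + Q b (real n - 2*real k)" if "k \<le> n" for k
  proof -
    have "f k = HF n \<epsilon> h (real (n-k)) 0 0" using Ham_C[OF c1[OF that]] unfolding f_def by simp
    also have "\<dots> = K + Q b (2*real (n-k) - real n)" unfolding HF_first K_def b_def by simp
    also have "2*real (n-k) - real n = real n - 2*real k" using that by (simp add: of_nat_diff)
    finally show ?thesis .
  qed
  have v2: "f (n+k) = K + Q b (2*real k - real n)" if "k \<le> n" for k
    using Ham_C[OF c2[OF that]] HF_b HF_first unfolding f_def K_def b_def by simp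
  have bl: "b < 0" "-2 \<le> b" using e0 e1 h0 h1 unfolding b_def by auto
  show "let M = Max (f ` {0..2*n}) in
        (even n \<and> h - \<epsilon> < 1 \<longrightarrow>
             M = f (n div 2) \<and>
             f (n div 2) = f (n + n div 2) \<and>
             f (n + n div 2) = real n - real n ^ 2 / 2 + h * real n) \<and>
        (even n \<and> 1 \<le> h - \<epsilon> \<and> h - \<epsilon> < 2 \<longrightarrow>
             M = f ((n + 2) div 2) \<and>
             f ((n + 2) div 2) = f (n + (n - 2) div 2) \<and>
             f (n + (n - 2) div 2) =
               real n - real n ^ 2 / 2 - 2 * (\<epsilon> + 1) + h * (real n + 2)) \<and>
        (odd n \<longrightarrow>
             M = f ((n + 1) div 2) \<and>
             f ((n + 1) div 2) = f (n + (n - 1) div 2) \<and>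
             f (n + (n - 1) div 2) =
               real n - (real n ^ 2 + 1) / 2 - \<epsilon> + h * (real n + 1))"
    unfolding Let_def
  proof (intro conjI impI)
    assume A: "even n \<and> h - \<epsilon> < 1"
    hence ev: "even n" by simp
    then obtain q where q: "n = 2*q" by (elim evenE)
    have bb: "\<bar>b\<bar> \<le> 1" using A bl unfolding b_def by auto
    have fj: "f (n div 2) = K" using v1[of "n div 2"] q unfolding Q_def by simp
    have fj2: "f (n + n div 2) = K" using v2[of "n div 2"] q unfolding Q_def by simp
    show "Max (f ` {0..2*n}) = f (n div 2)"
    proof (rule max2[where c="K"])
      fix k assume kn: "k \<le> n"
      show "f k \<le> K" using v1[OF kn] Qe[OF bb par_e2[OF ev, of k]] by simp
    next
      fix k assume kn: "k \<le> n"
      show "f (n+k) \<le> K" using v2[OF kn] Qe[OF bb par_e1[OF ev, of k]] by simp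
    next
      show "n div 2 \<le> 2*n" by simp
    qed (rule fj)
    show "f (n div 2) = f (n + n div 2)" using fj fj2 by simp
    show "f (n + n div 2) = real n - real n ^ 2 / 2 + h * real n" using fj2 K_def by simp
  next
    assume A: "even n \<and> 1 \<le> h - \<epsilon> \<and> h - \<epsilon> < 2"
    hence ev: "even n" by simp
    then obtain q where q: "n = 2*q" by (elim evenE)
    have q1: "q \<ge> 1" using q n2 by simp
    have b0: "-2 \<le> b" "b \<le> -1" using A bl unfolding b_def by auto
    have fj: "f ((n+2) div 2) = K + Q b (-2)" using v1[of "(n+2) div 2"] q q1 by simp
    have fj2: "f (n + (n-2) div 2) = K + Q b (-2)"
    proof -
      have "(n-2) div 2 = q - 1" using q by simp
      hence "real ((n-2) div 2) = real q - 1" using q1 by (simp add: of_nat_diff)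
      thus ?thesis using v2[of "(n-2) div 2"] q by simp
    qed
    show "Max (f ` {0..2*n}) = f ((n+2) div 2)"
    proof (rule max2[where c="K + Q b (-2)"])
      fix k assume kn: "k \<le> n"
      show "f k \<le> K + Q b (-2)" using v1[OF kn] Qe2[OF b0 par_e2[OF ev, of k]] by simp
    next
      fix k assume kn: "k \<le> n"
      show "f (n+k) \<le> K + Q b (-2)" using v2[OF kn] Qe2[OF b0 par_e1[OF ev, of k]] by simp
    next
      show "(n+2) div 2 \<le> 2*n" using n2 by simp
    qed (rule fj)
    show "f ((n+2) div 2) = f (n + (n-2) div 2)" using fj fj2 by simp
    show "f (n + (n-2) div 2) = real n - real n ^ 2 / 2 - 2 * (\<epsilon> + 1) + h * (real n + 2)"
      using fj2 unfolding K_def Q_def b_def by (simp add: field_simps)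
  next
    assume odn: "odd n"
    then obtain q where q: "n = 2*q+1" by (blast elim: oddE)
    have b0: "-2 \<le> b" "b \<le> 0" using bl by auto
    have fj: "f ((n+1) div 2) = K + Q b (-1)" using v1[of "(n+1) div 2"] q by simp
    have fj2: "f (n + (n-1) div 2) = K + Q b (-1)" using v2[of "(n-1) div 2"] q by simp
    show "Max (f ` {0..2*n}) = f ((n+1) div 2)"
    proof (rule max2[where c="K + Q b (-1)"])
      fix k assume kn: "k \<le> n"
      show "f k \<le> K + Q b (-1)" using v1[OF kn] Qo'[OF b0 par_o2[OF odn, of k]] by simp
    next
      fix k assume kn: "k \<le> n"
      show "f (n+k) \<le> K + Q b (-1)" using v2[OF kn] Qo'[OF b0 par_o1[OF odn, of k]] by simp
    next
      show "(n+1) div 2 \<le> 2*n" using n2 by simp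
    qed (rule fj)
    show "f ((n+1) div 2) = f (n + (n-1) div 2)" using fj fj2 by simp
    show "f (n + (n-1) div 2) = real n - (real n ^ 2 + 1) / 2 - \<epsilon> + h * (real n + 1)"
      using fj2 unfolding K_def Q_def b_def by (simp add: field_simps)
  qed
qed

lemma partC:
  fixes n :: nat and \<epsilon> h :: real
  assumes n2: "n \<ge> 2" and h0: "0 < h" and h1: "h \<le> 1"
  shows
   "(\<forall>\<omega> :: nat \<Rightarrow> nat \<Rightarrow> real.
      0 < - \<epsilon> \<and> - \<epsilon> < h \<and> h \<le> 1 \<and>
      (\<forall>k\<le>n. \<omega> k \<in> Cset n n k k) \<longrightarrow>
      (let M = Max ((\<lambda>k. Ham n \<epsilon> h (\<omega> k)) ` {0..n}) in
        (even n \<longrightarrow> M = Ham n \<epsilon> h (\<omega> (n div 2)) \<and>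
             Ham n \<epsilon> h (\<omega> (n div 2)) = real n - real n ^ 2 / 2 - h * real n) \<and>
        (odd n \<longrightarrow> M = Ham n \<epsilon> h (\<omega> ((n - 1) div 2)) \<and>
             Ham n \<epsilon> h (\<omega> ((n - 1) div 2)) =
               real n - (real n ^ 2 + 1) / 2 + \<epsilon> - h * (real n - 1))))"
proof (intro allI impI)
  fix \<omega> :: "nat \<Rightarrow> nat \<Rightarrow> real"
  assume H: "0 < - \<epsilon> \<and> - \<epsilon> < h \<and> h \<le> 1 \<and> (\<forall>k\<le>n. \<omega> k \<in> Cset n n k k)"
  hence e0: "0 < - \<epsilon>" and e1: "- \<epsilon> < h" and c1: "\<And>k. k \<le> n \<Longrightarrow> \<omega> k \<in> Cset n n k k" by auto
  define K where "K = real n - real n^2/2 - h*real n"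
  define b where "b = -(\<epsilon> + h)"
  define f where "f = (\<lambda>k. Ham n \<epsilon> h (\<omega> k))"
  have v1: "f k = K + Q b (2*real k - real n)" if "k \<le> n" for k
    using Ham_C[OF c1[OF that]] HF_cross unfolding f_def K_def b_def by simp
  have bl: "b < 0" "-1 \<le> b" using e0 e1 h1 unfolding b_def by auto
  show "let M = Max (f ` {0..n}) in
        (even n \<longrightarrow> M = f (n div 2) \<and>
             f (n div 2) = real n - real n ^ 2 / 2 - h * real n) \<and>
        (odd n \<longrightarrow> M = f ((n - 1) div 2) \<and>
             f ((n - 1) div 2) =
               real n - (real n ^ 2 + 1) / 2 + \<epsilon> - h * (real n - 1))"
    unfolding Let_def
  proof (intro conjI impI)
    assume ev: "even n"
    then obtain q where q: "n = 2*q" by (elim evenE)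
    have bb: "\<bar>b\<bar> \<le> 1" using bl by auto
    have fj: "f (n div 2) = K" using v1[of "n div 2"] q unfolding Q_def by simp
    show "Max (f ` {0..n}) = f (n div 2)"
    proof (rule max1[where c="K"])
      fix k assume kn: "k \<le> n"
      show "f k \<le> K" using v1[OF kn] Qe[OF bb par_e1[OF ev, of k]] by simp
    next
      show "n div 2 \<le> n" by simp
    qed (rule fj)
    show "f (n div 2) = real n - real n ^ 2 / 2 - h * real n" using fj K_def by simp
  next
    assume odn: "odd n"
    then obtain q where q: "n = 2*q+1" by (blast elim: oddE)
    have b0: "-2 \<le> b" "b \<le> 0" using bl by auto
    have fj: "f ((n-1) div 2) = K + Q b (-1)" using v1[of "(n-1) div 2"] q by simp
    show "Max (f ` {0..n}) = f ((n-1) div 2)"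
    proof (rule max1[where c="K + Q b (-1)"])
      fix k assume kn: "k \<le> n"
      show "f k \<le> K + Q b (-1)" using v1[OF kn] Qo'[OF b0 par_o1[OF odn, of k]] by simp
    next
      show "(n-1) div 2 \<le> n" by simp
    qed (rule fj)
    show "f ((n-1) div 2) = real n - (real n ^ 2 + 1) / 2 + \<epsilon> - h * (real n - 1)"
      using fj unfolding K_def Q_def b_def by (simp add: field_simps)
  qed
qed

theorem lemma5p2:
  fixes n :: nat and \<epsilon> h :: real
  assumes n2: "n \<ge> 2" and h0: "0 < h" and h1: "h \<le> 1"
  shows
   "(\<forall>\<omega> :: nat \<Rightarrow> nat \<Rightarrow> real.
      0 \<le> \<epsilon> \<and> \<epsilon> \<le> 1 \<and>
      (\<forall>k\<le>n. \<omega> k \<in> Cset n k 0 0 \<and> \<omega> (n + k) \<in> Cset n n k k) \<longrightarrow>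
      (let M = Max ((\<lambda>k. Ham n \<epsilon> h (\<omega> k)) ` {0..2*n}) in
        (even n \<longrightarrow> M = Ham n \<epsilon> h (\<omega> (n div 2)) \<and>
             Ham n \<epsilon> h (\<omega> (n div 2)) = real n - real n ^ 2 / 2 + h * real n) \<and>
        (odd n \<and> h \<le> \<epsilon> \<longrightarrow> M = Ham n \<epsilon> h (\<omega> ((n + 1) div 2)) \<and>
             Ham n \<epsilon> h (\<omega> ((n + 1) div 2)) =
               real n - (real n ^ 2 + 1) / 2 + \<epsilon> + h * (real n - 1)) \<and>
        (odd n \<and> \<epsilon> < h \<longrightarrow> M = Ham n \<epsilon> h (\<omega> ((n - 1) div 2)) \<and>
             Ham n \<epsilon> h (\<omega> ((n - 1) div 2)) =
               real n - (real n ^ 2 + 1) / 2 - \<epsilon> + h * (real n + 1))))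
  \<and>
   (\<forall>\<omega> :: nat \<Rightarrow> nat \<Rightarrow> real.
      0 < h \<and> h < - \<epsilon> \<and> - \<epsilon> \<le> 1 \<and>
      (\<forall>k\<le>n. \<omega> k \<in> Cset n (n - k) 0 0 \<and> \<omega> (n + k) \<in> Cset n 0 k 0) \<longrightarrow>
      (let M = Max ((\<lambda>k. Ham n \<epsilon> h (\<omega> k)) ` {0..2*n}) in
        (even n \<and> h - \<epsilon> < 1 \<longrightarrow>
             M = Ham n \<epsilon> h (\<omega> (n div 2)) \<and>
             Ham n \<epsilon> h (\<omega> (n div 2)) = Ham n \<epsilon> h (\<omega> (n + n div 2)) \<and>
             Ham n \<epsilon> h (\<omega> (n + n div 2)) = real n - real n ^ 2 / 2 + h * real n) \<and>
        (even n \<and> 1 \<le> h - \<epsilon> \<and> h - \<epsilon> < 2 \<longrightarrow>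
             M = Ham n \<epsilon> h (\<omega> ((n + 2) div 2)) \<and>
             Ham n \<epsilon> h (\<omega> ((n + 2) div 2)) = Ham n \<epsilon> h (\<omega> (n + (n - 2) div 2)) \<and>
             Ham n \<epsilon> h (\<omega> (n + (n - 2) div 2)) =
               real n - real n ^ 2 / 2 - 2 * (\<epsilon> + 1) + h * (real n + 2)) \<and>
        (odd n \<longrightarrow>
             M = Ham n \<epsilon> h (\<omega> ((n + 1) div 2)) \<and>
             Ham n \<epsilon> h (\<omega> ((n + 1) div 2)) = Ham n \<epsilon> h (\<omega> (n + (n - 1) div 2)) \<and>
             Ham n \<epsilon> h (\<omega> (n + (n - 1) div 2)) =
               real n - (real n ^ 2 + 1) / 2 - \<epsilon> + h * (real n + 1))))
  \<and>
   (\<forall>\<omega> :: nat \<Rightarrow> nat \<Rightarrow> real.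
      0 < - \<epsilon> \<and> - \<epsilon> < h \<and> h \<le> 1 \<and>
      (\<forall>k\<le>n. \<omega> k \<in> Cset n n k k) \<longrightarrow>
      (let M = Max ((\<lambda>k. Ham n \<epsilon> h (\<omega> k)) ` {0..n}) in
        (even n \<longrightarrow> M = Ham n \<epsilon> h (\<omega> (n div 2)) \<and>
             Ham n \<epsilon> h (\<omega> (n div 2)) = real n - real n ^ 2 / 2 - h * real n) \<and>
        (odd n \<longrightarrow> M = Ham n \<epsilon> h (\<omega> ((n - 1) div 2)) \<and>
             Ham n \<epsilon> h (\<omega> ((n - 1) div 2)) =
               real n - (real n ^ 2 + 1) / 2 + \<epsilon> - h * (real n - 1))))"
    using partA[OF n2 h0 h1] partB[OF n2 h0 h1] partC[OF n2 h0 h1] by (intro conjI)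

end
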